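(* Let $\Gamma$ be the directed union of a directed family of subgroups $(\Gamma_i)_{i\in I}$, each of which is $2$-boundedly acyclic. Then $\Gamma$ is $2$-boundedly acyclic.
   Context: A group $G$ is $2$-boundedly acyclic if $\operatorname{H}^1_b(G;\mathbb{R}) \cong 0$ and $\operatorname{H}^2_b(G;\mathbb{R}) \cong 0$, where $\operatorname{H}^*_b(\cdot;\mathbb{R})$ is bounded cohomology with trivial real coefficients. *)

theory Defs
  imports Complex_Main "HOL-Algebra.Group"
begin

text \<open>Bounded cohomology with trivial real coefficients via the inhomogeneous
  bar resolution.\<close>

definition tuples :: "('a, 'b) monoid_scheme \<Rightarrow> nat \<Rightarrow> 'a list set" where
  "tuples G n = {xs. length xs = n \<and> set xs \<subseteq> carrier G}"

definition bounded_cochain :: "('a, 'b) monoid_scheme \<Rightarrow> nat \<Rightarrow> ('a list \<Rightarrow> real) \<Rightarrow> bool" where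
  "bounded_cochain G n f \<longleftrightarrow> (\<exists>C. \<forall>xs\<in>tuples G n. \<bar>f xs\<bar> \<le> C)"

text \<open>Coboundary of an n-cochain, evaluated at an (n+1)-tuple:
  (df)(g_1..g_{n+1}) = f(g_2..g_{n+1}) + sum_{i=1}^n (-1)^i f(..,g_i g_{i+1},..)
                       + (-1)^{n+1} f(g_1..g_n).\<close>
definition coboundary :: "('a, 'b) monoid_scheme \<Rightarrow> nat \<Rightarrow> ('a list \<Rightarrow> real) \<Rightarrow> 'a list \<Rightarrow> real" where
  "coboundary G n f xs =
     f (tl xs)
     + (\<Sum>i<n. (-1) ^ (i + 1) * f (take i xs @ [xs ! i \<otimes>\<^bsub>G\<^esub> xs ! (i + 1)] @ drop (i + 2) xs))
     + (-1) ^ (n + 1) * f (butlast xs)"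

text \<open>H^n_b(G;R) = 0 (for n >= 1): every bounded n-cocycle is the coboundary of a
  bounded (n-1)-cochain.\<close>
definition bcohom_vanishes :: "('a, 'b) monoid_scheme \<Rightarrow> nat \<Rightarrow> bool" where
  "bcohom_vanishes G n \<longleftrightarrow>
     (\<forall>f. bounded_cochain G n f \<and> (\<forall>xs\<in>tuples G (n + 1). coboundary G n f xs = 0)
        \<longrightarrow> (\<exists>g. bounded_cochain G (n - 1) g \<and>
                 (\<forall>xs\<in>tuples G n. f xs = coboundary G (n - 1) g xs)))"

definition two_boundedly_acyclic :: "('a, 'b) monoid_scheme \<Rightarrow> bool" where
  "two_boundedly_acyclic G \<longleftrightarrow> bcohom_vanishes G 1 \<and> bcohom_vanishes G 2"

end

theory Submission
  imports Defs
begin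

lemma qm_bound:
  fixes \<phi> :: "'a \<Rightarrow> real"
  assumes cl: "\<forall>a\<in>S. \<forall>b\<in>S. m a b \<in> S"
    and d: "\<forall>a\<in>S. \<forall>b\<in>S. \<bar>\<phi> (m a b) - \<phi> a - \<phi> b\<bar> \<le> C"
    and bd: "\<forall>y\<in>S. \<bar>\<phi> y\<bar> \<le> B"
    and x: "x \<in> S"
  shows "\<bar>\<phi> x\<bar> \<le> C"
proof -
  define p where "p n = ((\<lambda>y. m y x) ^^ n) x" for n
  have pS: "p n \<in> S" for n
    by (induction n) (auto simp: p_def x cl)
  have lohi: "\<phi> (p n) \<ge> \<phi> x + real n * (\<phi> x - C) \<and> \<phi> (p n) \<le> \<phi> x + real n * (\<phi> x + C)" for n
  proof (induction n)
    case 0 then show ?case by (simp add: p_def)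
  next
    case (Suc n)
    have e: "p (Suc n) = m (p n) x" by (simp add: p_def)
    have "\<bar>\<phi> (m (p n) x) - \<phi> (p n) - \<phi> x\<bar> \<le> C" using d pS x by blast
    then have "\<phi> (p (Suc n)) - \<phi> (p n) - \<phi> x \<le> C \<and> - C \<le> \<phi> (p (Suc n)) - \<phi> (p n) - \<phi> x"
      unfolding e by linarith
    moreover have "real (Suc n) * (\<phi> x - C) = real n * (\<phi> x - C) + (\<phi> x - C)"
      "real (Suc n) * (\<phi> x + C) = real n * (\<phi> x + C) + (\<phi> x + C)" by (simp_all add: distrib_right)
    ultimately show ?case using Suc.IH by (smt (verit))
  qed
  show ?thesis
  proof (rule ccontr)
    assume "\<not> ?thesis"
    hence "\<phi> x > C \<or> \<phi> x < - C" by auto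
    then show False
    proof
      assume h: "\<phi> x > C"
      then obtain n where n: "B - \<phi> x < of_nat n * (\<phi> x - C)"
        using ex_less_of_nat_mult[of "\<phi> x - C" "B - \<phi> x"] by auto
      have "\<phi> (p n) > B" using lohi[of n] n by linarith
      moreover have "\<bar>\<phi> (p n)\<bar> \<le> B" using bd pS by blast
      ultimately show False by auto
    next
      assume h: "\<phi> x < - C"
      then obtain n where n: "B + \<phi> x < of_nat n * (- \<phi> x - C)"
        using ex_less_of_nat_mult[of "- \<phi> x - C" "B + \<phi> x"] by auto
      have "real n * (- \<phi> x - C) = - (real n * (\<phi> x + C))" by (simp add: algebra_simps)
      then have "\<phi> (p n) < - B" using lohi[of n] n by linarith
      moreover have "\<bar>\<phi> (p n)\<bar> \<le> B" using bd pS by blast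
      ultimately show False by auto
    qed
  qed
qed

lemma tuples_upd: "tuples (G\<lparr>carrier := S\<rparr>) n = {xs. length xs = n \<and> set xs \<subseteq> S}"
  by (simp add: tuples_def)

lemma cob_upd: "coboundary (G\<lparr>carrier := S\<rparr>) n f = coboundary G n f"
  unfolding coboundary_def by simp

lemma cob0: "coboundary G 0 g [a] = 0"
  unfolding coboundary_def by simp

lemma cob1: "coboundary G 1 g [a, b] = g [b] - g [a \<otimes>\<^bsub>G\<^esub> b] + g [a]"
  unfolding coboundary_def by simp

lemma cob1s: "coboundary G (Suc 0) g [a, b] = g [b] - g [a \<otimes>\<^bsub>G\<^esub> b] + g [a]"
  unfolding coboundary_def by simp

lemma len1: "length xs = 1 \<Longrightarrow> \<exists>x. xs = [x]"
  by (auto simp: length_Suc_conv)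

lemma len2: "length xs = 2 \<Longrightarrow> \<exists>a b. xs = [a, b]"
  by (auto simp: length_Suc_conv numeral_2_eq_2)

theorem corollary4p16:
  fixes \<Gamma> :: "('a, 'b) monoid_scheme" and I :: "'i set" and H :: "'i \<Rightarrow> 'a set"
  assumes "group \<Gamma>"
    and "\<And>i. i \<in> I \<Longrightarrow> subgroup (H i) \<Gamma>"
    and "I \<noteq> {}"
    and "\<And>i j. i \<in> I \<Longrightarrow> j \<in> I \<Longrightarrow> \<exists>k\<in>I. H i \<subseteq> H k \<and> H j \<subseteq> H k"
    and "carrier \<Gamma> = (\<Union>i\<in>I. H i)"
    and "\<And>i. i \<in> I \<Longrightarrow> two_boundedly_acyclic (\<Gamma>\<lparr>carrier := H i\<rparr>)"
  shows "two_boundedly_acyclic \<Gamma>"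
proof -
  have tsub: "tuples (\<Gamma>\<lparr>carrier := H i\<rparr>) n \<subseteq> tuples \<Gamma> n" if "i \<in> I" for i n
    using subgroup.subset[OF assms(2)[OF that]] by (auto simp: tuples_def)
  have bsub: "bounded_cochain (\<Gamma>\<lparr>carrier := H i\<rparr>) n f" if bi: "i \<in> I" "bounded_cochain \<Gamma> n f" for i n f
  proof -
    from bi(2) obtain C where C: "\<forall>xs\<in>tuples \<Gamma> n. \<bar>f xs\<bar> \<le> C" unfolding bounded_cochain_def by blast
    have "\<forall>xs\<in>tuples (\<Gamma>\<lparr>carrier := H i\<rparr>) n. \<bar>f xs\<bar> \<le> C" using C tsub[OF bi(1), of n] by (meson subsetD)
    then show ?thesis unfolding bounded_cochain_def by (rule exI)
  qed
  have mcl: "a \<otimes>\<^bsub>\<Gamma>\<^esub> b \<in> H i" if "i \<in> I" "a \<in> H i" "b \<in> H i" for i a b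
    using subgroup.m_closed[OF assms(2)[OF that(1)] that(2,3)] .
  have V1: "bcohom_vanishes \<Gamma> 1"
    unfolding bcohom_vanishes_def
  proof (intro allI impI)
    fix f assume fa: "bounded_cochain \<Gamma> 1 f \<and> (\<forall>xs\<in>tuples \<Gamma> (1 + 1). coboundary \<Gamma> 1 f xs = 0)"
    show "\<exists>g. bounded_cochain \<Gamma> (1 - 1) g \<and> (\<forall>xs\<in>tuples \<Gamma> 1. f xs = coboundary \<Gamma> (1 - 1) g xs)"
    proof (intro exI conjI ballI)
      show "bounded_cochain \<Gamma> (1 - 1) (\<lambda>_. 0)" by (auto simp: bounded_cochain_def)
    next
      fix xs assume xs: "xs \<in> tuples \<Gamma> 1"
      then have "length xs = 1" by (simp add: tuples_def)
      then obtain x where x: "xs = [x]" using len1 by blast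
      with xs assms(5) obtain i where i: "i \<in> I" "x \<in> H i" by (auto simp: tuples_def)
      have "bcohom_vanishes (\<Gamma>\<lparr>carrier := H i\<rparr>) 1" using assms(6) i unfolding two_boundedly_acyclic_def by blast
      moreover have "bounded_cochain (\<Gamma>\<lparr>carrier := H i\<rparr>) 1 f" using bsub fa i by blast
      moreover have "\<forall>xs\<in>tuples (\<Gamma>\<lparr>carrier := H i\<rparr>) (1 + 1). coboundary (\<Gamma>\<lparr>carrier := H i\<rparr>) 1 f xs = 0"
        unfolding cob_upd using fa tsub[OF i(1), of "1 + 1"] by blast
      ultimately obtain g where "\<forall>xs\<in>tuples (\<Gamma>\<lparr>carrier := H i\<rparr>) 1. f xs = coboundary (\<Gamma>\<lparr>carrier := H i\<rparr>) (1 - 1) g xs"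
        unfolding bcohom_vanishes_def by blast
      moreover have "[x] \<in> tuples (\<Gamma>\<lparr>carrier := H i\<rparr>) 1" using i by (simp add: tuples_upd)
      ultimately have "f [x] = 0" by (simp add: cob0)
      then show "f xs = coboundary \<Gamma> (1 - 1) (\<lambda>_. 0) xs" using x by (simp add: cob0)
    qed
  qed
  have V2: "bcohom_vanishes \<Gamma> 2"
    unfolding bcohom_vanishes_def
  proof (intro allI impI)
    fix f assume fa: "bounded_cochain \<Gamma> 2 f \<and> (\<forall>xs\<in>tuples \<Gamma> (2 + 1). coboundary \<Gamma> 2 f xs = 0)"
    then obtain Cf where Cf: "\<forall>xs\<in>tuples \<Gamma> 2. \<bar>f xs\<bar> \<le> Cf" unfolding bounded_cochain_def by blast
    have ex: "\<exists>g. bounded_cochain (\<Gamma>\<lparr>carrier := H i\<rparr>) 1 g \<and>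
        (\<forall>a\<in>H i. \<forall>b\<in>H i. f [a, b] = g [b] - g [a \<otimes>\<^bsub>\<Gamma>\<^esub> b] + g [a])" if i: "i \<in> I" for i
    proof -
      have "bcohom_vanishes (\<Gamma>\<lparr>carrier := H i\<rparr>) 2" using assms(6) i unfolding two_boundedly_acyclic_def by blast
      moreover have "bounded_cochain (\<Gamma>\<lparr>carrier := H i\<rparr>) 2 f" using bsub fa i by blast
      moreover have "\<forall>xs\<in>tuples (\<Gamma>\<lparr>carrier := H i\<rparr>) (2 + 1). coboundary (\<Gamma>\<lparr>carrier := H i\<rparr>) 2 f xs = 0"
        using fa tsub[OF i] by (auto simp: cob_upd)
      ultimately obtain g where g: "bounded_cochain (\<Gamma>\<lparr>carrier := H i\<rparr>) 1 g"
        "\<forall>xs\<in>tuples (\<Gamma>\<lparr>carrier := H i\<rparr>) 2. f xs = coboundary (\<Gamma>\<lparr>carrier := H i\<rparr>) 1 g xs"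
        unfolding bcohom_vanishes_def by fastforce
      have "\<forall>a\<in>H i. \<forall>b\<in>H i. f [a, b] = g [b] - g [a \<otimes>\<^bsub>\<Gamma>\<^esub> b] + g [a]"
      proof (intro ballI)
        fix a b assume "a \<in> H i" "b \<in> H i"
        then have "[a, b] \<in> tuples (\<Gamma>\<lparr>carrier := H i\<rparr>) 2" by (simp add: tuples_upd)
        then show "f [a, b] = g [b] - g [a \<otimes>\<^bsub>\<Gamma>\<^esub> b] + g [a]" using g(2) by (simp add: cob_upd cob1s)
      qed
      then show ?thesis using g(1) by blast
    qed
    define gi where "gi i = (SOME g. bounded_cochain (\<Gamma>\<lparr>carrier := H i\<rparr>) 1 g \<and>
        (\<forall>a\<in>H i. \<forall>b\<in>H i. f [a, b] = g [b] - g [a \<otimes>\<^bsub>\<Gamma>\<^esub> b] + g [a]))" for i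
    have gi: "bounded_cochain (\<Gamma>\<lparr>carrier := H i\<rparr>) 1 (gi i) \<and>
        (\<forall>a\<in>H i. \<forall>b\<in>H i. f [a, b] = gi i [b] - gi i [a \<otimes>\<^bsub>\<Gamma>\<^esub> b] + gi i [a])" if "i \<in> I" for i
      unfolding gi_def using someI_ex[OF ex[OF that]] .
    have gib: "\<exists>B. \<forall>x\<in>H i. \<bar>gi i [x]\<bar> \<le> B" if ii: "i \<in> I" for i
    proof -
      obtain B where "\<forall>xs\<in>tuples (\<Gamma>\<lparr>carrier := H i\<rparr>) 1. \<bar>gi i xs\<bar> \<le> B"
        using gi[OF ii] unfolding bounded_cochain_def by blast
      then show ?thesis by (intro exI[of _ B]) (auto simp: tuples_upd)
    qed
    have bound: "\<bar>gi i [x]\<bar> \<le> Cf" if i: "i \<in> I" and x: "x \<in> H i" for i x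
    proof -
      obtain B where B: "\<forall>x\<in>H i. \<bar>gi i [x]\<bar> \<le> B" using gib[OF i] by blast
      show ?thesis
      proof (rule qm_bound[where m = "\<lambda>a b. a \<otimes>\<^bsub>\<Gamma>\<^esub> b" and \<phi> = "\<lambda>y. gi i [y]" and S = "H i" and B = B])
        show "\<forall>a\<in>H i. \<forall>b\<in>H i. \<bar>gi i [a \<otimes>\<^bsub>\<Gamma>\<^esub> b] - gi i [a] - gi i [b]\<bar> \<le> Cf"
        proof (intro ballI)
          fix a b assume ab: "a \<in> H i" "b \<in> H i"
          then have "[a, b] \<in> tuples \<Gamma> 2" using tsub[OF i, of 2] by (auto simp: tuples_upd)
          then have "\<bar>f [a, b]\<bar> \<le> Cf" using Cf by blast
          moreover have "f [a, b] = gi i [b] - gi i [a \<otimes>\<^bsub>\<Gamma>\<^esub> b] + gi i [a]" using gi[OF i] ab by blast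
          ultimately show "\<bar>gi i [a \<otimes>\<^bsub>\<Gamma>\<^esub> b] - gi i [a] - gi i [b]\<bar> \<le> Cf" by linarith
        qed
      qed (use B x mcl i in auto)
    qed
    have uniq: "gi i [x] = gi k [x]" if i: "i \<in> I" and k: "k \<in> I" and sub: "H i \<subseteq> H k" and x: "x \<in> H i" for i k x
    proof -
      have "\<bar>gi i [x] - gi k [x]\<bar> \<le> 0"
      proof (rule qm_bound[where m = "\<lambda>a b. a \<otimes>\<^bsub>\<Gamma>\<^esub> b" and \<phi> = "\<lambda>y. gi i [y] - gi k [y]" and S = "H i" and B = "2 * Cf"])
        show "\<forall>a\<in>H i. \<forall>b\<in>H i. \<bar>(gi i [a \<otimes>\<^bsub>\<Gamma>\<^esub> b] - gi k [a \<otimes>\<^bsub>\<Gamma>\<^esub> b]) - (gi i [a] - gi k [a]) - (gi i [b] - gi k [b])\<bar> \<le> 0"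
        proof (intro ballI)
          fix a b assume ab: "a \<in> H i" "b \<in> H i"
          have "f [a, b] = gi i [b] - gi i [a \<otimes>\<^bsub>\<Gamma>\<^esub> b] + gi i [a]" using gi[OF i] ab by blast
          moreover have "f [a, b] = gi k [b] - gi k [a \<otimes>\<^bsub>\<Gamma>\<^esub> b] + gi k [a]" using gi[OF k] ab sub by blast
          ultimately show "\<bar>(gi i [a \<otimes>\<^bsub>\<Gamma>\<^esub> b] - gi k [a \<otimes>\<^bsub>\<Gamma>\<^esub> b]) - (gi i [a] - gi k [a]) - (gi i [b] - gi k [b])\<bar> \<le> 0" by linarith
        qed
      next
        show "\<forall>y\<in>H i. \<bar>gi i [y] - gi k [y]\<bar> \<le> 2 * Cf"
          using bound[OF i] bound[OF k] sub by (smt (verit) subsetD)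
      qed (use x mcl i in auto)
      then show ?thesis by simp
    qed
    define sel where "sel x = (SOME i. i \<in> I \<and> x \<in> H i)" for x
    have sel: "sel x \<in> I \<and> x \<in> H (sel x)" if "x \<in> carrier \<Gamma>" for x
    proof -
      have "\<exists>i. i \<in> I \<and> x \<in> H i" using that assms(5) by blast
      then show ?thesis unfolding sel_def by (rule someI_ex)
    qed
    define g where "g xs = gi (sel (hd xs)) xs" for xs
    have gk: "g [a] = gi k [a]" if k: "k \<in> I" and a: "a \<in> H k" for k a
    proof -
      have ac: "a \<in> carrier \<Gamma>" using assms(5) k a by blast
      obtain m where m: "m \<in> I" "H (sel a) \<subseteq> H m" "H k \<subseteq> H m" using assms(4)[OF k sel[OF ac, THEN conjunct1]] by blast
      have "g [a] = gi (sel a) [a]" by (simp add: g_def)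
      also have "\<dots> = gi m [a]" using uniq[OF sel[OF ac, THEN conjunct1] m(1) m(2) sel[OF ac, THEN conjunct2]] .
      also have "\<dots> = gi k [a]" using uniq[OF k m(1) m(3) a] by simp
      finally show ?thesis .
    qed
    show "\<exists>g. bounded_cochain \<Gamma> (2 - 1) g \<and> (\<forall>xs\<in>tuples \<Gamma> 2. f xs = coboundary \<Gamma> (2 - 1) g xs)"
    proof (intro exI conjI ballI)
      show "bounded_cochain \<Gamma> (2 - 1) g"
        unfolding bounded_cochain_def
      proof (intro exI ballI)
        fix xs assume xs: "xs \<in> tuples \<Gamma> (2 - 1)"
        then have "length xs = 1" by (simp add: tuples_def)
        then obtain x where x: "xs = [x]" using len1 by blast
        with xs have xc: "x \<in> carrier \<Gamma>" by (auto simp: tuples_def)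
        have e: "g [x] = gi (sel x) [x]" by (simp add: g_def)
        show "\<bar>g xs\<bar> \<le> Cf" unfolding x e
          by (rule bound[OF sel[OF xc, THEN conjunct1] sel[OF xc, THEN conjunct2]])
      qed
    next
      fix xs assume xs: "xs \<in> tuples \<Gamma> 2"
      then have "length xs = 2" by (simp add: tuples_def)
      then obtain a b where x: "xs = [a, b]" using len2 by blast
      with xs have ac: "a \<in> carrier \<Gamma>" and bc: "b \<in> carrier \<Gamma>" by (auto simp: tuples_def)
      have "a \<in> (\<Union>i\<in>I. H i)" using ac assms(5) by simp
      then obtain i where i: "i \<in> I" "a \<in> H i" by blast
      have "b \<in> (\<Union>i\<in>I. H i)" using bc assms(5) by simp
      then obtain j where j: "j \<in> I" "b \<in> H j" by blast
      note ij = i j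
      then obtain k where k: "k \<in> I" "a \<in> H k" "b \<in> H k" using assms(4)[of i j] by blast
      have "f [a, b] = gi k [b] - gi k [a \<otimes>\<^bsub>\<Gamma>\<^esub> b] + gi k [a]" using gi[OF k(1)] k by blast
      also have "\<dots> = g [b] - g [a \<otimes>\<^bsub>\<Gamma>\<^esub> b] + g [a]"
        by (simp only: gk[OF k(1) k(3)] gk[OF k(1) mcl[OF k]] gk[OF k(1) k(2)])
      finally show "f xs = coboundary \<Gamma> (2 - 1) g xs" using x by (simp add: cob1s)
    qed
  qed
  show ?thesis unfolding two_boundedly_acyclic_def using V1 V2 by (rule conjI)
qed

end
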